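(* Let $P$ be a set of $n$ points in the plane and let $\mathcal{D}'$ be a set of closed disks with pairwise disjoint interiors such that the boundary circle of each disk in $\mathcal{D}'$ contains at least two points of $P$. Then $|\mathcal{D}'|\le n$. Moreover, this bound is tight: for every $n\ge 3$ there exist a set $P$ of $n$ points and such a family $\mathcal{D}'$ with $|\mathcal{D}'|=n$. *)

theory Defs
  imports "HOL-Analysis.Analysis"
begin

definition closed_disk :: "(real^2) set \<Rightarrow> bool" where
  "closed_disk D \<longleftrightarrow> (\<exists>c r. r > 0 \<and> D = cball c r)"

definition admissible_family :: "(real^2) set \<Rightarrow> (real^2) set set \<Rightarrow> bool" where
  "admissible_family P DD \<longleftrightarrow>
     (\<forall>D\<in>DD. closed_disk D \<and> (\<exists>p q. p \<in> P \<and> q \<in> P \<and> p \<noteq> q \<and> p \<in> frontier D \<and> q \<in> frontier D))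
     \<and> (\<forall>D1\<in>DD. \<forall>D2\<in>DD. D1 \<noteq> D2 \<longrightarrow> interior D1 \<inter> interior D2 = {})"

end

theory Submission
  imports Defs
begin


lemma a0: fixes u w :: "'a::real_inner" shows "(r1 *\<^sub>R u - t *\<^sub>R w) \<bullet> (r1 *\<^sub>R u - t *\<^sub>R w) = r1^2 * (u \<bullet> u) - 2 * r1 * t * (u \<bullet> w) + t^2 * (w \<bullet> w)"
  by (simp add: inner_diff_left inner_diff_right inner_commute[of w u] power2_eq_square algebra_simps)
lemma a1: fixes c p x u w :: "'a::real_inner" assumes "x = p + t *\<^sub>R w" "c - p = r *\<^sub>R u"
  shows "c - x = r *\<^sub>R u - t *\<^sub>R w"
  using assms by (metis diff_diff_eq)
lemma a2: fixes c x :: "'a::real_inner" assumes "(c - x) \<bullet> (c - x) < r^2" "r > 0"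
  shows "dist c x < r"
proof -
  have "dist c x ^2 < r^2" using assms by (simp add: dist_norm power2_norm_eq_inner)
  thus ?thesis using assms(2) using power2_less_imp_less by fastforce
qed

lemma a3: fixes c p u w x :: "'a::real_inner"
  assumes "c - p = r *\<^sub>R u" "x = p + t *\<^sub>R w" "u \<bullet> u = 1" "u \<bullet> w = 1 + s" "w \<bullet> w = 2 + 2 * s"
    "1 + s > 0" "0 < t" "t < r"
  shows "dist c x < r"
proof -
  have "(c - x) \<bullet> (c - x) = r^2 * (u \<bullet> u) - 2 * r * t * (u \<bullet> w) + t^2 * (w \<bullet> w)"
    using a1[OF assms(2,1)] a0 by simp
  also have "\<dots> = r^2 - 2 * t * (1 + s) * (r - t)"
    using assms(3-5) by (simp add: algebra_simps power2_eq_square)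
  also have "\<dots> < r^2" using assms(6-8) by simp
  finally show ?thesis using a2 assms(7,8) by (meson less_trans)
qed

lemma two_balls_meet:
  fixes c1 c2 p :: "'a::real_inner"
  assumes r1: "r1 > 0" and r2: "r2 > 0" and d1: "dist c1 p = r1" and d2: "dist c2 p = r2"
    and ne: "(1/r1) *\<^sub>R (c1 - p) \<noteq> - ((1/r2) *\<^sub>R (c2 - p))"
  shows "ball c1 r1 \<inter> ball c2 r2 \<noteq> {}"
proof -
  define u1 where "u1 = (1/r1) *\<^sub>R (c1 - p)"
  define u2 where "u2 = (1/r2) *\<^sub>R (c2 - p)"
  have n1: "u1 \<bullet> u1 = 1" using d1 r1 unfolding u1_def
    by (simp add: dist_norm norm_minus_commute power2_eq_square flip: power2_norm_eq_inner)
  have n2: "u2 \<bullet> u2 = 1" using d2 r2 unfolding u2_def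
    by (simp add: dist_norm norm_minus_commute power2_eq_square flip: power2_norm_eq_inner)
  define w where "w = u1 + u2"
  define s where "s = u1 \<bullet> u2"
  have ww: "w \<bullet> w = 2 + 2 * s" unfolding w_def s_def
    using n1 n2 by (simp add: inner_add_left inner_add_right inner_commute)
  have "w \<noteq> 0"
  proof
    assume "w = 0"
    hence "u1 = - u2" unfolding w_def by (simp add: eq_neg_iff_add_eq_0)
    with ne show False unfolding u1_def u2_def by simp
  qed
  hence "w \<bullet> w > 0" by simp
  hence sp: "1 + s > 0" using ww by simp
  define t where "t = min r1 r2 / 2"
  have t0: "t > 0" and t1: "t < r1" and t2: "t < r2" using r1 r2 unfolding t_def by auto
  define x where "x = p + t *\<^sub>R w"
  have c1e: "c1 - p = r1 *\<^sub>R u1" using r1 unfolding u1_def by simp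
  have c2e: "c2 - p = r2 *\<^sub>R u2" using r2 unfolding u2_def by simp
  have w1: "u1 \<bullet> w = 1 + s" unfolding w_def s_def using n1 by (simp add: inner_add_right)
  have w2: "u2 \<bullet> w = 1 + s" unfolding w_def s_def using n2 by (simp add: inner_add_right inner_commute)
  have "dist c1 x < r1" using a3[OF c1e x_def n1 w1 ww sp t0 t1] .
  moreover have "dist c2 x < r2" using a3[OF c2e x_def n2 w2 ww sp t0 t2] .
  ultimately show ?thesis by auto
qed

definition dfam :: "(real^2) set set \<Rightarrow> bool" where
  "dfam DD \<longleftrightarrow> (\<forall>D\<in>DD. closed_disk D) \<and> (\<forall>D1\<in>DD. \<forall>D2\<in>DD. D1 \<noteq> D2 \<longrightarrow> interior D1 \<inter> interior D2 = {})"

lemma adm_dfam: "admissible_family P DD \<Longrightarrow> dfam DD"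
  unfolding admissible_family_def dfam_def by simp

lemma pair_opp:
  assumes adm: "dfam DD" and "D1 \<in> DD" "D2 \<in> DD" "D1 \<noteq> D2"
    and "D1 = cball c1 r1" "D2 = cball c2 r2" "r1 > 0" "r2 > 0" "dist c1 p = r1" "dist c2 p = r2"
  shows "(1/r1) *\<^sub>R (c1 - p) = - ((1/r2) *\<^sub>R (c2 - p))"
proof (rule ccontr)
  assume "\<not> ?thesis"
  hence "ball c1 r1 \<inter> ball c2 r2 \<noteq> {}" using two_balls_meet assms(7-10) by blast
  moreover have "interior D1 \<inter> interior D2 = {}" using adm assms(2-4) unfolding dfam_def by blast
  ultimately show False using assms(5,6) by (simp add: interior_cball)
qed

lemma disk_center:
  assumes adm: "dfam DD" and "D \<in> DD"
  obtains c r where "D = cball c r" "r > 0"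
proof -
  have "closed_disk D" using assms unfolding dfam_def by simp
  thus ?thesis using that unfolding closed_disk_def by auto
qed

lemma at_most_two:
  assumes adm: "dfam DD" and D: "D1 \<in> DD" "D2 \<in> DD" "D3 \<in> DD"
    and ne: "D1 \<noteq> D2" "D1 \<noteq> D3" "D2 \<noteq> D3"
    and p: "p \<in> frontier D1" "p \<in> frontier D2" "p \<in> frontier D3"
  shows False
proof -
  obtain c1 r1 where 1: "D1 = cball c1 r1" "r1 > 0" using disk_center[OF adm D(1)] by blast
  obtain c2 r2 where 2: "D2 = cball c2 r2" "r2 > 0" using disk_center[OF adm D(2)] by blast
  obtain c3 r3 where 3: "D3 = cball c3 r3" "r3 > 0" using disk_center[OF adm D(3)] by blast
  have d1: "dist c1 p = r1" using p(1) 1 by (simp add: frontier_cball)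
  have d2: "dist c2 p = r2" using p(2) 2 by (simp add: frontier_cball)
  have d3: "dist c3 p = r3" using p(3) 3 by (simp add: frontier_cball)
  define u1 where "u1 = (1/r1) *\<^sub>R (c1 - p)"
  define u2 where "u2 = (1/r2) *\<^sub>R (c2 - p)"
  define u3 where "u3 = (1/r3) *\<^sub>R (c3 - p)"
  have "u1 = - u2" unfolding u1_def u2_def using pair_opp[OF adm D(1,2) ne(1) 1(1) 2(1) 1(2) 2(2) d1 d2] .
  moreover have "u1 = - u3" unfolding u1_def u3_def using pair_opp[OF adm D(1,3) ne(2) 1(1) 3(1) 1(2) 3(2) d1 d3] .
  moreover have "u2 = - u3" unfolding u2_def u3_def using pair_opp[OF adm D(2,3) ne(3) 2(1) 3(1) 2(2) 3(2) d2 d3] .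
  ultimately have "u2 = - u2" by simp
  hence "u2 + u2 = 0" by (simp only: eq_neg_iff_add_eq_0)
  hence "2 *\<^sub>R u2 = 0" by (simp only: scaleR_2)
  hence "u2 = 0" by simp
  hence "c2 = p" using 2(2) unfolding u2_def by simp
  thus False using d2 2(2) by simp
qed

lemma no_three_finite:
  assumes "\<And>a b c. a \<in> S \<Longrightarrow> b \<in> S \<Longrightarrow> c \<in> S \<Longrightarrow> a \<noteq> b \<Longrightarrow> a \<noteq> c \<Longrightarrow> b \<noteq> c \<Longrightarrow> False"
  shows "finite S \<and> card S \<le> 2"
proof (rule ccontr)
  assume "\<not> ?thesis"
  then consider "infinite S" | "3 \<le> card S" by linarith
  hence "\<exists>T. T \<subseteq> S \<and> card T = 3"
  proof cases
    case 1 then show ?thesis using infinite_arbitrarily_large by blast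
  next
    case 2 then show ?thesis using obtain_subset_with_card_n by metis
  qed
  then obtain T where T: "T \<subseteq> S" "card T = 3" by blast
  then obtain x y z where "T = {x,y,z}" "x \<noteq> y" "y \<noteq> z" "x \<noteq> z" by (auto simp: card_3_iff)
  thus False using T assms by blast
qed

lemma point_card:
  assumes adm: "admissible_family P DD"
  shows "finite {D \<in> DD. p \<in> frontier D} \<and> card {D \<in> DD. p \<in> frontier D} \<le> 2"
proof (rule no_three_finite)
  fix a b c assume "a \<in> {D \<in> DD. p \<in> frontier D}" "b \<in> {D \<in> DD. p \<in> frontier D}"
    "c \<in> {D \<in> DD. p \<in> frontier D}" "a \<noteq> b" "a \<noteq> c" "b \<noteq> c"
  thus False using at_most_two[OF adm_dfam[OF adm], of a b c p] by simp
qed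

lemma disk_pts:
  assumes adm: "admissible_family P DD" and "D \<in> DD"
  obtains p q where "p \<in> P" "q \<in> P" "p \<noteq> q" "p \<in> frontier D" "q \<in> frontier D"
proof -
  have "\<exists>p q. p \<in> P \<and> q \<in> P \<and> p \<noteq> q \<and> p \<in> frontier D \<and> q \<in> frontier D"
    using assms unfolding admissible_family_def by simp
  thus ?thesis using that by auto
qed

lemma card_filter_sum:
  assumes "finite A" shows "card {x\<in>A. Q x} = (\<Sum>x\<in>A. if Q x then 1 else 0)"
  using assms by (simp add: sum.inter_filter[symmetric])

lemma part1:
  assumes fin: "finite P" and adm: "admissible_family P DD"
  shows "finite DD \<and> card DD \<le> card P"
proof -
  define A where "A p = {D \<in> DD. p \<in> frontier D}" for p
  have A: "finite (A p)" "card (A p) \<le> 2" for p using point_card[OF adm] unfolding A_def by auto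
  have sub: "DD \<subseteq> (\<Union>p\<in>P. A p)"
  proof
    fix D assume D: "D \<in> DD"
    obtain p where "p \<in> P" "p \<in> frontier D" using disk_pts[OF adm D] by blast
    thus "D \<in> (\<Union>p\<in>P. A p)" using D unfolding A_def by auto
  qed
  hence finD: "finite DD" using A fin by (meson finite_UN_I finite_subset)
  define B where "B D = {p \<in> P. p \<in> frontier D}" for D
  have B2: "2 \<le> card (B D)" if DD': "D \<in> DD" for D
  proof -
    obtain p q where "p \<in> P" "q \<in> P" "p \<noteq> q" "p \<in> frontier D" "q \<in> frontier D"
      using disk_pts[OF adm DD'] by blast
    hence "{p,q} \<subseteq> B D" "card {p,q} = 2" unfolding B_def by auto
    moreover have "finite (B D)" using fin unfolding B_def by simp
    ultimately show ?thesis by (metis card_mono)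
  qed
  have "2 * card DD = (\<Sum>D\<in>DD. 2)" by simp
  also have "\<dots> \<le> (\<Sum>D\<in>DD. card (B D))" using B2 by (rule sum_mono)
  also have "\<dots> = (\<Sum>D\<in>DD. \<Sum>p\<in>P. if p \<in> frontier D then 1 else 0)"
    unfolding B_def using fin by (simp add: card_filter_sum)
  also have "\<dots> = (\<Sum>p\<in>P. \<Sum>D\<in>DD. if p \<in> frontier D then 1 else 0)" by (rule sum.swap)
  also have "\<dots> = (\<Sum>p\<in>P. card (A p))"
    unfolding A_def using finD by (simp add: card_filter_sum)
  also have "\<dots> \<le> (\<Sum>p\<in>P. 2)" using A by (intro sum_mono) auto
  also have "\<dots> = 2 * card P" by simp
  finally show ?thesis using finD by simp
qed



lemma dist_vec2: "dist (vector [a, b] :: real^2) (vector [c, d]) = sqrt ((a - c)^2 + (b - d)^2)"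
  by (simp add: dist_norm norm_vec_def L2_set_def sum_2 vector_2)

lemma int_sq1: "(d::int) \<noteq> 0 \<Longrightarrow> 1 \<le> d^2"
proof -
  assume h: "d \<noteq> 0"
  hence "1 \<le> \<bar>d\<bar>" by simp
  hence "1 * 1 \<le> \<bar>d\<bar> * \<bar>d\<bar>" by (intro mult_mono) auto
  thus ?thesis by (simp add: power2_eq_square)
qed

lemma int_sq4: "2 \<le> \<bar>d::int\<bar> \<Longrightarrow> 4 \<le> d^2"
proof -
  assume h: "2 \<le> \<bar>d\<bar>"
  have "2 * 2 \<le> \<bar>d\<bar> * \<bar>d\<bar>" using h by (intro mult_mono) auto
  thus ?thesis by (simp add: power2_eq_square)
qed

definition "aa n = (Suc n) div 2"
definition "XX n i = (if i < aa n then 2 * int i else 2 * (int n - 1 - int i) + 1)"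
definition "YY n i = (if i < aa n then 0 else sqrt 3)"
definition cc :: "nat \<Rightarrow> nat \<Rightarrow> real^2" where "cc n i = vector [real_of_int (XX n i), YY n i]"
definition "sc n i = (if i = n - 1 then 0 else Suc i)"

lemma sqdist: "(dist (cc n i) (cc n j))^2 = real_of_int ((XX n i - XX n j)^2) + (YY n i - YY n j)^2"
  unfolding cc_def dist_vec2 by simp

lemma far:
  assumes "3 \<le> n" "i < n" "j < n" "i \<noteq> j"
  shows "2 \<le> dist (cc n i) (cc n j)"
proof -
  have "4 \<le> (dist (cc n i) (cc n j))^2"
  proof (cases "i < aa n")
    case True
    show ?thesis
    proof (cases "j < aa n")
      case True
      have "4 \<le> (XX n i - XX n j)^2" using \<open>i < aa n\<close> True assms(4)
        by (intro int_sq4) (auto simp: XX_def)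
      hence "4 \<le> real_of_int ((XX n i - XX n j)^2)" by linarith
      moreover have "(YY n i - YY n j)^2 = 0" using \<open>i < aa n\<close> True by (simp add: YY_def)
      ultimately show ?thesis unfolding sqdist by linarith
    next
      case False
      have "XX n i - XX n j \<noteq> 0" using \<open>i < aa n\<close> False by (simp add: XX_def) presburger
      hence "1 \<le> (XX n i - XX n j)^2" by (rule int_sq1)
      hence "1 \<le> real_of_int ((XX n i - XX n j)^2)" by linarith
      moreover have "(YY n i - YY n j)^2 = 3" using \<open>i < aa n\<close> False by (simp add: YY_def)
      ultimately show ?thesis unfolding sqdist by linarith
    qed
  next
    case False
    show ?thesis
    proof (cases "j < aa n")
      case True
      have "XX n i - XX n j \<noteq> 0" using \<open>\<not> i < aa n\<close> True by (simp add: XX_def) presburger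
      hence "1 \<le> (XX n i - XX n j)^2" by (rule int_sq1)
      hence "1 \<le> real_of_int ((XX n i - XX n j)^2)" by linarith
      moreover have "(YY n i - YY n j)^2 = 3" using \<open>\<not> i < aa n\<close> True by (simp add: YY_def)
      ultimately show ?thesis unfolding sqdist by linarith
    next
      case False
      have "4 \<le> (XX n i - XX n j)^2" using \<open>\<not> i < aa n\<close> False assms(4)
        by (intro int_sq4) (auto simp: XX_def)
      hence "4 \<le> real_of_int ((XX n i - XX n j)^2)" by linarith
      moreover have "(YY n i - YY n j)^2 = 0" using \<open>\<not> i < aa n\<close> False by (simp add: YY_def)
      ultimately show ?thesis unfolding sqdist by linarith
    qed
  qed
  moreover have "(2::real)^2 = 4" by simp
  ultimately show ?thesis using power2_le_imp_le[of 2 "dist (cc n i) (cc n j)"] zero_le_dist[of "cc n i" "cc n j"] by argo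
qed

lemma adj:
  assumes "3 \<le> n" "i < n"
  shows "dist (cc n i) (cc n (sc n i)) = 2"
proof -
  have "(dist (cc n i) (cc n (sc n i)))^2 = 4"
  proof -
    consider "Suc i < aa n" | "Suc i = aa n" | "aa n \<le> i" "i < n - 1" | "i = n - 1"
      using assms unfolding aa_def by linarith
    thus ?thesis
    proof cases
      case 1
      hence "sc n i = Suc i" "i < aa n" using assms unfolding aa_def sc_def by auto
      thus ?thesis using 1 unfolding sqdist by (simp add: XX_def YY_def)
    next
      case 2
      hence s: "sc n i = Suc i" "i < aa n" using assms unfolding aa_def sc_def by auto
      have "(XX n i - XX n (sc n i))^2 = 1"
      proof -
        have "n = 2*i+1 \<or> n = 2*i+2" using 2 unfolding aa_def by presburger
        hence "XX n i - XX n (sc n i) = 1 \<or> XX n i - XX n (sc n i) = -1"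
          using s 2 unfolding XX_def by auto
        thus ?thesis by auto
      qed
      moreover have "(YY n i - YY n (sc n i))^2 = 3" using s 2 by (simp add: YY_def)
      ultimately show ?thesis unfolding sqdist by linarith
    next
      case 3
      hence "sc n i = Suc i" using assms unfolding sc_def by auto
      thus ?thesis using 3 assms unfolding sqdist by (simp add: XX_def YY_def)
    next
      case 4
      hence s: "sc n i = 0" "\<not> i < aa n" "0 < aa n" using assms unfolding sc_def aa_def by auto
      have "(XX n i - XX n (sc n i))^2 = 1" using 4 s assms unfolding XX_def by simp
      moreover have "(YY n i - YY n (sc n i))^2 = 3" using s by (simp add: YY_def)
      ultimately show ?thesis unfolding sqdist by linarith
    qed
  qed
  moreover have "(2::real)^2 = 4" by simp
  ultimately show ?thesis using power2_eq_imp_eq[of "dist (cc n i) (cc n (sc n i))" 2] zero_le_dist[of "cc n i" "cc n (sc n i)"] by argo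
qed

definition "pt n i = midpoint (cc n i) (cc n (sc n i))"
definition "DK n i = cball (cc n i) (1::real)"

lemma sc_lt: "3 \<le> n \<Longrightarrow> i < n \<Longrightarrow> sc n i < n"
  unfolding sc_def by auto

lemma DK_inj: assumes "3 \<le> n" shows "inj_on (DK n) {..<n}"
proof (rule inj_onI)
  fix i j assume ij: "i \<in> {..<n}" "j \<in> {..<n}" "DK n i = DK n j"
  show "i = j"
  proof (rule ccontr)
    assume "i \<noteq> j"
    hence "2 \<le> dist (cc n i) (cc n j)" using far assms ij by auto
    moreover have "cc n i \<in> DK n i" unfolding DK_def by simp
    hence "dist (cc n j) (cc n i) \<le> 1" using ij(3) by (metis DK_def mem_cball)
    ultimately show False by (simp add: dist_commute)
  qed
qed

lemma DK_dfam: assumes "3 \<le> n" shows "dfam (DK n ` {..<n})"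
  unfolding dfam_def
proof (intro conjI ballI impI)
  fix D assume "D \<in> DK n ` {..<n}"
  then obtain i where "D = DK n i" by auto
  thus "closed_disk D" unfolding DK_def closed_disk_def by (intro exI[of _ "cc n i"] exI[of _ 1]) simp
next
  fix D1 D2 assume D: "D1 \<in> DK n ` {..<n}" "D2 \<in> DK n ` {..<n}" "D1 \<noteq> D2"
  then obtain i j where ij: "i < n" "j < n" "D1 = DK n i" "D2 = DK n j" by auto
  hence "i \<noteq> j" using D by auto
  hence d: "2 \<le> dist (cc n i) (cc n j)" using far assms ij by auto
  show "interior D1 \<inter> interior D2 = {}"
  proof (rule ccontr)
    assume "interior D1 \<inter> interior D2 \<noteq> {}"
    then obtain x where "dist (cc n i) x < 1" "dist (cc n j) x < 1"
      using ij unfolding DK_def by (auto simp: interior_cball)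
    moreover have "dist (cc n i) (cc n j) \<le> dist (cc n i) x + dist (cc n j) x" using dist_triangle[of "cc n i" "cc n j" x] by (simp add: dist_commute)
    ultimately show False using d by linarith
  qed
qed

lemma pt_front1: "3 \<le> n \<Longrightarrow> i < n \<Longrightarrow> pt n i \<in> frontier (DK n i)"
  unfolding pt_def DK_def frontier_cball using adj[of n i] by (simp add: dist_midpoint)

lemma pt_front2: "3 \<le> n \<Longrightarrow> i < n \<Longrightarrow> pt n i \<in> frontier (DK n (sc n i))"
  unfolding pt_def DK_def frontier_cball using adj[of n i] by (simp add: dist_midpoint)

lemma pt_inj: assumes "3 \<le> n" shows "inj_on (pt n) {..<n}"
proof (rule inj_onI)
  fix i j assume ij: "i \<in> {..<n}" "j \<in> {..<n}" "pt n i = pt n j"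
  show "i = j"
  proof (rule ccontr)
    assume ne: "i \<noteq> j"
    have lt: "i < n" "j < n" "sc n i < n" "sc n j < n" using ij sc_lt assms by auto
    have inj: "DK n a \<noteq> DK n b" if "a < n" "b < n" "a \<noteq> b" for a b
      using inj_onD[OF DK_inj[OF assms], of a b] that by auto
    have dis: "\<And>a b c. a < n \<Longrightarrow> b < n \<Longrightarrow> c < n \<Longrightarrow> a \<noteq> b \<Longrightarrow> a \<noteq> c \<Longrightarrow> b \<noteq> c \<Longrightarrow>
       pt n i \<in> frontier (DK n a) \<Longrightarrow> pt n i \<in> frontier (DK n b) \<Longrightarrow> pt n i \<in> frontier (DK n c) \<Longrightarrow> False"
      using at_most_two[OF DK_dfam[OF assms]] inj by (metis image_eqI lessThan_iff)
    have f: "pt n i \<in> frontier (DK n i)" "pt n i \<in> frontier (DK n (sc n i))"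
      "pt n i \<in> frontier (DK n j)" "pt n i \<in> frontier (DK n (sc n j))"
      using pt_front1[OF assms lt(1)] pt_front2[OF assms lt(1)] pt_front1[OF assms lt(2)] pt_front2[OF assms lt(2)] ij(3)
      by simp_all
    have s1: "sc n i \<noteq> i" "sc n j \<noteq> j" using assms lt unfolding sc_def by auto
    show False
    proof (cases "sc n i = j")
      case True
      have sji: "sc n j \<noteq> i" using True assms lt unfolding sc_def by (auto split: if_splits)
      show False by (rule dis[OF lt(1) lt(2) lt(4) ne not_sym[OF sji] not_sym[OF s1(2)] f(1) f(3) f(4)])
    next
      case False
      show False by (rule dis[OF lt(1) lt(3) lt(2) not_sym[OF s1(1)] ne False f(1) f(2) f(3)])
    qed
  qed
qed

lemma part2:
  assumes n: "3 \<le> n"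
  shows "\<exists>(P :: (real^2) set) DD. finite P \<and> card P = n \<and>
            admissible_family P DD \<and> finite DD \<and> card DD = n"
proof (intro exI conjI)
  show "finite (pt n ` {..<n})" by simp
  show "card (pt n ` {..<n}) = n" using card_image[OF pt_inj[OF n]] by simp
  show "finite (DK n ` {..<n})" by simp
  show "card (DK n ` {..<n}) = n" using card_image[OF DK_inj[OF n]] by simp
  show "admissible_family (pt n ` {..<n}) (DK n ` {..<n})"
    unfolding admissible_family_def
  proof (intro conjI ballI impI)
    fix D assume "D \<in> DK n ` {..<n}"
    then obtain i where i: "i < n" "D = DK n i" by auto
    show "closed_disk D" unfolding i DK_def closed_disk_def by (intro exI[of _ "cc n i"] exI[of _ 1]) simp
    define j where "j = (if i = 0 then n - 1 else i - 1)"
    have j: "j < n" "sc n j = i" "j \<noteq> i" using i n unfolding j_def sc_def by auto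
    have "pt n i \<noteq> pt n j" using inj_onD[OF pt_inj[OF n], of i j] i j by auto
    moreover have "pt n i \<in> frontier D" using pt_front1[OF n i(1)] i by simp
    moreover have "pt n j \<in> frontier D" using pt_front2[OF n j(1)] j i by simp
    ultimately show "\<exists>p q. p \<in> pt n ` {..<n} \<and> q \<in> pt n ` {..<n} \<and> p \<noteq> q \<and> p \<in> frontier D \<and> q \<in> frontier D"
      using i j by (intro exI[of _ "pt n i"] exI[of _ "pt n j"]) auto
  next
    fix D1 D2 assume "D1 \<in> DK n ` {..<n}" "D2 \<in> DK n ` {..<n}" "D1 \<noteq> D2"
    thus "interior D1 \<inter> interior D2 = {}" using DK_dfam[OF n] unfolding dfam_def by blast
  qed
qed


theorem mainTheorem12:
  shows "(\<forall>(P :: (real^2) set) DD. finite P \<longrightarrow> admissible_family P DD \<longrightarrow>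
            finite DD \<and> card DD \<le> card P)
       \<and> (\<forall>n::nat. n \<ge> 3 \<longrightarrow> (\<exists>(P :: (real^2) set) DD. finite P \<and> card P = n \<and>
            admissible_family P DD \<and> finite DD \<and> card DD = n))"
  using part1 part2 by blast

end
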